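(* Let $N_1,N_2,N_3\in\mathbb{N}$ with $(N_1,N_2)\neq(0,0)$, and let $\mathcal{G}=\mathcal{G}_{\mathrm{KMA}}(N_1,N_2,N_3)$. Then $\mathcal{G}-\mathcal{G}=\{-\max\mathcal{G},\ldots,\max\mathcal{G}\}$.
   Context: For $a\in\mathbb{Z}$, $b\in\mathbb{N}_+$, $c\in\mathbb{Z}$, $\{a:b:c\}=\{a,a+b,\ldots\}\cap(-\infty,c]$ (empty if $c<a$), $\{a:c\}=\{a:1:c\}$; set sums/differences are elementwise, $\mathcal{A}+c=\{a+c\}$. For $N_1,N_2\in\mathbb{N}$: $\mathcal{D}_1=\{0:N_1-1\}$, $\mathcal{D}_2=\{0:N_1+1:(N_2-1)(N_1+1)\}$, $\mathcal{D}_{\mathrm{CNA}}=\mathcal{D}_1\cup(\mathcal{D}_2+N_1)\cup(\mathcal{D}_1+N_2(N_1+1))$, $M=\max\mathcal{D}_{\mathrm{CNA}}$. For $N_3\in\mathbb{N}$: $\mathcal{D}_3=\{jN_1: j=0,\ldots,N_1\}+\{(i-1)(N_1^2+M+1): i=1,\ldots,N_3\}$ (empty if $N_3=0$). The Kl{\o}ve--Mossige array is $\mathcal{G}_{\mathrm{KMA}}(N_1,N_2,N_3)=\mathcal{D}_{\mathrm{CNA}}\cup(\mathcal{D}_3+2M+1)$. *)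

theory Defs
  imports Main
begin

definition aprog :: "int \<Rightarrow> int \<Rightarrow> int \<Rightarrow> int set" where
  "aprog a b c = {x. \<exists>k::nat. x = a + int k * b \<and> x \<le> c}"

definition shift :: "int set \<Rightarrow> int \<Rightarrow> int set" where
  "shift A c = (\<lambda>x. x + c) ` A"

definition setsum :: "int set \<Rightarrow> int set \<Rightarrow> int set" where
  "setsum A B = {a + b | a b. a \<in> A \<and> b \<in> B}"

definition setdiff :: "int set \<Rightarrow> int set \<Rightarrow> int set" where
  "setdiff A B = {a - b | a b. a \<in> A \<and> b \<in> B}"

definition D1 :: "nat \<Rightarrow> int set" where
  "D1 N1 = aprog 0 1 (int N1 - 1)"

definition D2 :: "nat \<Rightarrow> nat \<Rightarrow> int set" where
  "D2 N1 N2 = aprog 0 (int N1 + 1) ((int N2 - 1) * (int N1 + 1))"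

definition DCNA :: "nat \<Rightarrow> nat \<Rightarrow> int set" where
  "DCNA N1 N2 = D1 N1 \<union> shift (D2 N1 N2) (int N1) \<union> shift (D1 N1) (int N2 * (int N1 + 1))"

definition MCNA :: "nat \<Rightarrow> nat \<Rightarrow> int" where
  "MCNA N1 N2 = Max (DCNA N1 N2)"

definition D3 :: "nat \<Rightarrow> nat \<Rightarrow> nat \<Rightarrow> int set" where
  "D3 N1 N2 N3 = setsum {int j * int N1 | j. j \<le> N1}
     {(int i - 1) * (int N1 ^ 2 + MCNA N1 N2 + 1) | i. 1 \<le> i \<and> i \<le> N3}"

definition GKMA :: "nat \<Rightarrow> nat \<Rightarrow> nat \<Rightarrow> int set" where
  "GKMA N1 N2 N3 = DCNA N1 N2 \<union> shift (D3 N1 N2 N3) (2 * MCNA N1 N2 + 1)"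

end

theory Submission
  imports Defs
begin

lemma D1_mem: "x \<in> D1 N1 \<longleftrightarrow> 0 \<le> x \<and> x \<le> int N1 - 1"
  unfolding D1_def aprog_def
  apply auto
  apply (rule_tac x="nat x" in exI) by auto

lemma D1s_mem: "x \<in> shift (D1 N1) c \<longleftrightarrow> c \<le> x \<and> x \<le> c + int N1 - 1"
  unfolding shift_def
  apply (auto simp: image_iff D1_mem)
  apply (rule_tac x="x - c" in bexI) by (auto simp: D1_mem)

lemma D2s_mem: "x \<in> shift (D2 N1 N2) (int N1) \<longleftrightarrow>
   (\<exists>k. 0 \<le> k \<and> k \<le> int N2 - 1 \<and> x = int N1 + k*(int N1+1))"
proof
  assume "x \<in> shift (D2 N1 N2) (int N1)"
  then obtain k :: nat where k: "x = int N1 + int k * (int N1 + 1)"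
     "int k * (int N1 + 1) \<le> (int N2 - 1) * (int N1 + 1)"
    unfolding shift_def D2_def aprog_def by auto
  from k(2) have "int k \<le> int N2 - 1"
    by (meson mult_right_le_imp_le of_nat_less_0_iff not_le zero_less_one add_nonneg_pos of_nat_0_le_iff)
  then show "\<exists>k. 0 \<le> k \<and> k \<le> int N2 - 1 \<and> x = int N1 + k*(int N1+1)"
    using k(1) by (intro exI[of _ "int k"]) auto
next
  assume "\<exists>k. 0 \<le> k \<and> k \<le> int N2 - 1 \<and> x = int N1 + k*(int N1+1)"
  then obtain k where k: "0 \<le> k" "k \<le> int N2 - 1" "x = int N1 + k*(int N1+1)" by blast
  have "k*(int N1+1) \<le> (int N2 - 1)*(int N1+1)"
    using k(2) by (intro mult_right_mono) auto
  then have "k*(int N1+1) \<in> D2 N1 N2"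
    unfolding D2_def aprog_def using k(1) by (auto intro!: exI[of _ "nat k"])
  then show "x \<in> shift (D2 N1 N2) (int N1)"
    unfolding shift_def using k(3) by (auto simp: image_iff intro!: bexI[of _ "k*(int N1+1)"])
qed

lemma DCNA_mem: "x \<in> DCNA N1 N2 \<longleftrightarrow> (0 \<le> x \<and> x \<le> int N1 - 1) \<or>
   (\<exists>k. 0 \<le> k \<and> k \<le> int N2 - 1 \<and> x = int N1 + k*(int N1+1)) \<or>
   (int N2 * (int N1 + 1) \<le> x \<and> x \<le> int N2 * (int N1 + 1) + int N1 - 1)"
  unfolding DCNA_def by (simp add: D1_mem D1s_mem D2s_mem)

lemma DCNA_I1: "0 \<le> x \<Longrightarrow> x \<le> int N1 - 1 \<Longrightarrow> x \<in> DCNA N1 N2"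
  unfolding DCNA_mem by blast
lemma DCNA_I2: "0 \<le> k \<Longrightarrow> k \<le> int N2 - 1 \<Longrightarrow> int N1 + k*(int N1+1) \<in> DCNA N1 N2"
  unfolding DCNA_mem by blast
lemma DCNA_I3: "int N2 * (int N1 + 1) \<le> x \<Longrightarrow> x \<le> int N2 * (int N1 + 1) + int N1 - 1 \<Longrightarrow> x \<in> DCNA N1 N2"
  unfolding DCNA_mem by blast

lemma DCNA_bound:
  assumes "x \<in> DCNA N1 N2"
  shows "0 \<le> x \<and> x \<le> int N2 * (int N1 + 1) + int N1 - 1"
proof -
  let ?n = "int N1" and ?m = "int N2"
  show ?thesis
  proof (cases "\<exists>k. 0 \<le> k \<and> k \<le> ?m - 1 \<and> x = ?n + k*(?n+1)")
    case True
    then obtain k where k: "0 \<le> k" "k \<le> ?m - 1" "x = ?n + k*(?n+1)" by blast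
    have "k*(?n+1) \<le> (?m - 1)*(?n+1)" using k(2) by (intro mult_right_mono) auto
    moreover have "0 \<le> k*(?n+1)" using k(1) by simp
    ultimately show ?thesis using k(3) by (simp add: algebra_simps)
  next
    case False
    then show ?thesis using assms unfolding DCNA_mem
      by (smt (verit) mult_nonneg_nonneg of_nat_0_le_iff)
  qed
qed

lemma M0_mem:
  assumes "(N1, N2) \<noteq> (0, 0)"
  shows "int N2 * (int N1 + 1) + int N1 - 1 \<in> DCNA N1 N2"
proof (cases "N1 = 0")
  case True
  then have "N2 \<ge> 1" using assms by auto
  then show ?thesis unfolding DCNA_mem using True
    by (intro disjI2 disjI1 exI[of _ "int N2 - 1"]) auto
next
  case False
  then show ?thesis unfolding DCNA_mem by auto
qed

lemma DCNA_finite: "finite (DCNA N1 N2)"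
  by (rule finite_subset[of _ "{0..int N2 * (int N1 + 1) + int N1 - 1}"])
     (use DCNA_bound in auto)

lemma MCNA_eq:
  assumes "(N1, N2) \<noteq> (0, 0)"
  shows "MCNA N1 N2 = int N2 * (int N1 + 1) + int N1 - 1"
  unfolding MCNA_def
  by (rule Max_eqI) (use DCNA_finite DCNA_bound M0_mem[OF assms] in auto)


lemma DCNA_diff:
  assumes "0 \<le> d" "d \<le> int N2 * (int N1 + 1) + int N1 - 1"
  shows "\<exists>a\<in>DCNA N1 N2. \<exists>b\<in>DCNA N1 N2. d = a - b"
proof -
  let ?n = "int N1" and ?m = "int N2"
  define q where "q = d div (?n+1)"
  define r where "r = d mod (?n+1)"
  have dqr: "d = q*(?n+1) + r" unfolding q_def r_def by (metis div_mult_mod_eq)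
  have r: "0 \<le> r" "r \<le> ?n" proof -
    have "(0::int) < ?n + 1" by simp
    then show "0 \<le> r" "r \<le> ?n" unfolding r_def
      using pos_mod_sign[of "?n+1" d] pos_mod_bound[of "?n+1" d] by linarith+
  qed
  have q0: "0 \<le> q" unfolding q_def using assms(1) by (simp add: pos_imp_zdiv_nonneg_iff)
  show ?thesis
  proof (cases "q \<le> ?m - 1")
    case True
    have a: "?n + q*(?n+1) \<in> DCNA N1 N2" using True q0 by (rule_tac DCNA_I2) auto
    show ?thesis
    proof (cases "r = 0")
      case True
      have "?n + 0*(?n+1) \<in> DCNA N1 N2" using \<open>q \<le> ?m - 1\<close> q0 by (rule_tac DCNA_I2) auto
      moreover have "d = (?n + q*(?n+1)) - (?n + 0*(?n+1))" using dqr True by simp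
      ultimately show ?thesis using a by blast
    next
      case False
      have "?n - r \<in> DCNA N1 N2" using r False by (rule_tac DCNA_I1) auto
      moreover have "d = (?n + q*(?n+1)) - (?n - r)" using dqr by simp
      ultimately show ?thesis using a by blast
    qed
  next
    case False
    have "q = ?m"
    proof (rule ccontr)
      assume "q \<noteq> ?m"
      then have "?m + 1 \<le> q" using False by auto
      then have "(?m+1)*(?n+1) \<le> q*(?n+1)" by (intro mult_right_mono) auto
      moreover have "(?m+1)*(?n+1) = ?m*(?n+1) + ?n + 1" by (simp add: algebra_simps)
      ultimately show False using dqr assms r by linarith
    qed
    then have "r \<le> ?n - 1" using dqr assms by simp
    then have a: "?m*(?n+1) + r \<in> DCNA N1 N2" and b: "0 \<in> DCNA N1 N2"
      using r by (auto intro: DCNA_I1 DCNA_I3)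
    have "d = (?m*(?n+1) + r) - 0" using dqr \<open>q = ?m\<close> by simp
    then show ?thesis using a b by blast
  qed
qed


lemma ceil_div:
  fixes a n :: int
  assumes "0 < n" "0 \<le> a"
  obtains j where "0 \<le> j" "j*n \<le> a" "a - j*n \<le> n - 1"
proof -
  define j where "j = a div n"
  have "a = j*n + a mod n" unfolding j_def by (metis div_mult_mod_eq)
  moreover have "0 \<le> a mod n" "a mod n \<le> n - 1"
    using pos_mod_sign[OF assms(1), of a] pos_mod_bound[OF assms(1), of a] by linarith+
  moreover have "0 \<le> j" unfolding j_def using assms by (simp add: pos_imp_zdiv_nonneg_iff)
  ultimately show ?thesis using that by (metis add.commute add_diff_cancel_left' le_add_same_cancel1)
qed

lemma T_lemma:
  assumes "- (int N2 * (int N1 + 1) + int N1 - 1) \<le> t" "t \<le> int N1 ^ 2"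
  shows "\<exists>j x. 0 \<le> j \<and> j \<le> int N1 \<and> x \<in> DCNA N1 N2 \<and> t = j * int N1 - x"
proof -
  let ?n = "int N1" and ?m = "int N2"
  show ?thesis
  proof (cases "- ?n < t")
    case True
    then have n: "0 < ?n" using assms(2) by (cases "N1 = 0") auto
    obtain j where j: "0 \<le> j" "j*?n \<le> t + ?n - 1" "t + ?n - 1 - j*?n \<le> ?n - 1"
      using ceil_div[OF n, of "t + ?n - 1"] True by auto
    have "j*?n < (?n+1)*?n" using j(2) assms(2) by (simp add: power2_eq_square algebra_simps)
    then have "j < ?n + 1" using n by (simp add: mult_less_cancel_right)
    moreover have "j*?n - t \<in> DCNA N1 N2" using j by (intro DCNA_I1) auto
    ultimately show ?thesis using j(1) by (intro exI[of _ j] exI[of _ "j*?n - t"]) auto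
  next
    case False
    define u where "u = - t"
    have u: "?n \<le> u" "u \<le> ?m * (?n + 1) + ?n - 1" using False assms unfolding u_def by auto
    show ?thesis
    proof (cases "?m * (?n+1) \<le> u")
      case True
      then have "u \<in> DCNA N1 N2" using u by (intro DCNA_I3) auto
      then show ?thesis unfolding u_def by (intro exI[of _ 0] exI[of _ u]) (auto simp: u_def)
    next
      case False
      define q where "q = (u - ?n) div (?n+1)"
      define j where "j = (u - ?n) mod (?n+1)"
      have dqr: "u - ?n = q*(?n+1) + j" unfolding q_def j_def by (metis div_mult_mod_eq)
      have j: "0 \<le> j" "j \<le> ?n"
      proof -
        have "(0::int) < ?n + 1" by simp
        then show "0 \<le> j" "j \<le> ?n" unfolding j_def
          using pos_mod_sign[of "?n+1" "u - ?n"] pos_mod_bound[of "?n+1" "u - ?n"] by linarith+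
      qed
      have q0: "0 \<le> q" unfolding q_def using u(1) by (simp add: pos_imp_zdiv_nonneg_iff)
      have ux: "u + j*?n = ?n + (q+j)*(?n+1)" using dqr by (simp add: algebra_simps)
      show ?thesis
      proof (cases "q + j \<le> ?m - 1")
        case True
        then have "?n + (q+j)*(?n+1) \<in> DCNA N1 N2" using q0 j by (intro DCNA_I2) auto
        then show ?thesis using ux j unfolding u_def
          by (intro exI[of _ j] exI[of _ "?n + (q+j)*(?n+1)"]) auto
      next
        case False
        then have "?m * (?n+1) \<le> (q+j)*(?n+1)" by (intro mult_right_mono) auto
        then have big: "?n + ?m*(?n+1) \<le> u + j*?n" using ux by linarith
        have n: "0 < ?n"
        proof (rule ccontr)
          assume "\<not> 0 < ?n"
          then have "N1 = 0" by simp
          then show False using big \<open>\<not> ?m * (?n+1) \<le> u\<close> by simp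
        qed
        obtain j' where j': "0 \<le> j'" "j'*?n \<le> ?m*(?n+1) - u + ?n - 1"
            "?m*(?n+1) - u + ?n - 1 - j'*?n \<le> ?n - 1"
          using ceil_div[OF n, of "?m*(?n+1) - u + ?n - 1"] \<open>\<not> ?m * (?n+1) \<le> u\<close> by auto
        have "j'*?n < j*?n" using j'(2) big by linarith
        then have "j' < j" using n by (simp add: mult_less_cancel_right)
        moreover have "u + j'*?n \<in> DCNA N1 N2" using j' by (intro DCNA_I3) auto
        ultimately show ?thesis using j j'(1) unfolding u_def
          by (intro exI[of _ j'] exI[of _ "u + j'*?n"]) (auto simp: u_def)
      qed
    qed
  qed
qed


lemma GKMA_mem: "x \<in> GKMA N1 N2 N3 \<longleftrightarrow> x \<in> DCNA N1 N2 \<or>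
  (\<exists>j i. 0 \<le> j \<and> j \<le> int N1 \<and> 1 \<le> i \<and> i \<le> int N3 \<and>
     x = j * int N1 + (i - 1) * (int N1 ^ 2 + MCNA N1 N2 + 1) + (2 * MCNA N1 N2 + 1))"
  (is "_ \<longleftrightarrow> _ \<or> ?R")
proof -
  let ?P = "int N1 ^ 2 + MCNA N1 N2 + 1" and ?S = "2 * MCNA N1 N2 + 1"
  have "x \<in> shift (D3 N1 N2 N3) ?S \<longleftrightarrow> ?R"
  proof
    assume "x \<in> shift (D3 N1 N2 N3) ?S"
    then obtain j i :: nat where "j \<le> N1" "1 \<le> i" "i \<le> N3"
       "x = int j * int N1 + (int i - 1) * ?P + ?S"
      unfolding shift_def D3_def setsum_def by auto
    then show ?R by (intro exI[of _ "int j"] exI[of _ "int i"]) auto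
  next
    assume ?R
    then obtain j i where ji: "0 \<le> j" "j \<le> int N1" "1 \<le> i" "i \<le> int N3"
       "x = j * int N1 + (i - 1) * ?P + ?S" by blast
    have "j * int N1 + (i - 1) * ?P \<in> D3 N1 N2 N3"
      unfolding D3_def setsum_def using ji
      apply (simp)
      apply (rule exI[of _ "j * int N1"], rule exI[of _ "(i - 1) * (int N1 ^ 2 + MCNA N1 N2 + 1)"])
      apply (intro conjI)
        apply simp
       apply (rule exI[of _ "nat j"], simp)
      apply (rule exI[of _ "nat i"]) by (simp add: nat_le_iff)
    then show "x \<in> shift (D3 N1 N2 N3) ?S" unfolding shift_def using ji(5) by auto
  qed
  then show ?thesis unfolding GKMA_def by blast
qed

theorem mainTheorem13:
  fixes N1 N2 N3 :: nat
  assumes "(N1, N2) \<noteq> (0, 0)"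
  shows "setdiff (GKMA N1 N2 N3) (GKMA N1 N2 N3) = {- Max (GKMA N1 N2 N3) .. Max (GKMA N1 N2 N3)}"
proof -
  let ?n = "int N1" and ?m = "int N2"
  define M where "M = MCNA N1 N2"
  define P where "P = ?n ^ 2 + M + 1"
  define G where "G = GKMA N1 N2 N3"
  define Mx where "Mx = (if N3 = 0 then M else M + int N3 * P)"
  have Meq: "M = ?m * (?n + 1) + ?n - 1" unfolding M_def using MCNA_eq[OF assms] .
  have M0: "0 \<le> M" using DCNA_bound[OF M0_mem[OF assms]] Meq by simp
  have P0: "0 \<le> P" unfolding P_def using M0 by simp
  have Gmem: "x \<in> G \<longleftrightarrow> x \<in> DCNA N1 N2 \<or>
    (\<exists>j i. 0 \<le> j \<and> j \<le> ?n \<and> 1 \<le> i \<and> i \<le> int N3 \<and> x = j * ?n + (i - 1) * P + (2 * M + 1))" for x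
    unfolding G_def P_def M_def by (rule GKMA_mem)
  have Dbd: "x \<in> DCNA N1 N2 \<Longrightarrow> 0 \<le> x \<and> x \<le> M" for x using DCNA_bound Meq by auto
  have bound: "0 \<le> x \<and> x \<le> Mx" if "x \<in> G" for x
  proof -
    have MMx: "M \<le> Mx" unfolding Mx_def using P0 by auto
    show ?thesis
    proof (cases "x \<in> DCNA N1 N2")
      case True
      then have "0 \<le> x \<and> x \<le> M" by (rule Dbd)
      then show ?thesis using MMx by linarith
    next
      case False
      with that have "\<exists>j i. 0 \<le> j \<and> j \<le> ?n \<and> 1 \<le> i \<and> i \<le> int N3 \<and> x = j * ?n + (i - 1) * P + (2 * M + 1)"
        using Gmem[of x] by simp
      then obtain j i where ji: "0 \<le> j" "j \<le> ?n" "1 \<le> i" "i \<le> int N3"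
        "x = j * ?n + (i - 1) * P + (2 * M + 1)" by blast
      have m1: "j * ?n \<le> ?n * ?n" using ji(2) by (intro mult_right_mono) simp_all
      have m2: "(i - 1) * P \<le> (int N3 - 1) * P" using ji(4) P0 by (intro mult_right_mono) simp_all
      have m3: "0 \<le> j * ?n" using ji(1) by simp
      have m4: "0 \<le> (i - 1) * P" using ji(3) P0 by simp
      have N3: "N3 \<noteq> 0" using ji(3,4) by linarith
      have "Mx = ?n * ?n + (int N3 - 1) * P + (2 * M + 1)"
        unfolding Mx_def P_def using N3 by (simp add: power2_eq_square algebra_simps)
      then show ?thesis using ji(5) M0 m1 m2 m3 m4 by linarith
    qed
  qed
  have Mxmem: "Mx \<in> G"
  proof (cases "N3 = 0")
    case True
    then show ?thesis unfolding Mx_def using Gmem M0_mem[OF assms] Meq by simp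
  next
    case False
    have "Mx = ?n * ?n + (int N3 - 1) * P + (2 * M + 1)" unfolding Mx_def P_def using False
      by (simp add: power2_eq_square algebra_simps)
    then show ?thesis using False
      apply (subst Gmem)
      apply (rule disjI2, rule exI[of _ ?n], rule exI[of _ "int N3"])
      by simp
  qed
  have fin: "finite G" by (rule finite_subset[of _ "{0..Mx}"]) (use bound in auto)
  have MaxG: "Max G = Mx" by (rule Max_eqI) (use fin bound Mxmem in auto)
  have cover: "\<exists>a\<in>G. \<exists>b\<in>G. d = a - b" if d: "0 \<le> d" "d \<le> Mx" for d
  proof (cases "d \<le> M")
    case True
    then obtain a b where "a \<in> DCNA N1 N2" "b \<in> DCNA N1 N2" "d = a - b"
      using DCNA_diff[of d N2 N1] d Meq by auto
    then show ?thesis using Gmem[of a] Gmem[of b] by blast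
  next
    case False
    then have N3: "N3 \<noteq> 0" using d unfolding Mx_def by (auto split: if_splits)
    have Ppos: "0 < P" unfolding P_def using M0 by simp
    define q where "q = (d - M - 1) div P"
    define r where "r = (d - M - 1) mod P"
    have dqr: "d - M - 1 = q * P + r" unfolding q_def r_def by (metis div_mult_mod_eq)
    have r: "0 \<le> r" "r \<le> P - 1"
      unfolding r_def using pos_mod_sign[OF Ppos, of "d - M - 1"] pos_mod_bound[OF Ppos, of "d - M - 1"] by linarith+
    have q0: "0 \<le> q" unfolding q_def using False Ppos by (simp add: pos_imp_zdiv_nonneg_iff)
    have "d \<le> M + int N3 * P" using d N3 unfolding Mx_def by simp
    then have "q * P < int N3 * P" using dqr r by linarith
    then have qN: "q + 1 \<le> int N3" using Ppos by (simp add: mult_less_cancel_right)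
    obtain j x where jx: "0 \<le> j" "j \<le> ?n" "x \<in> DCNA N1 N2" "r - M = j * ?n - x"
      using T_lemma[of N2 N1 "r - M"] r Meq unfolding P_def by auto
    have a: "j * ?n + ((q+1) - 1) * P + (2 * M + 1) \<in> G"
      using jx qN q0
      apply (subst Gmem)
      apply (rule disjI2, rule exI[of _ j], rule exI[of _ "q+1"])
      by simp
    have "d = (j * ?n + ((q+1) - 1) * P + (2 * M + 1)) - x" using dqr jx(4) by simp
    then show ?thesis using a jx(3) Gmem[of x] by blast
  qed
  show ?thesis
    unfolding G_def[symmetric] MaxG
  proof (intro equalityI subsetI)
    fix y assume "y \<in> setdiff G G"
    then obtain a b where "a \<in> G" "b \<in> G" "y = a - b" unfolding setdiff_def by auto
    then show "y \<in> {-Mx..Mx}" using bound[of a] bound[of b] by auto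
  next
    fix y assume y: "y \<in> {-Mx..Mx}"
    show "y \<in> setdiff G G"
    proof (cases "0 \<le> y")
      case True
      then obtain a b where "a \<in> G" "b \<in> G" "y = a - b" using cover[of y] y by auto
      then show ?thesis unfolding setdiff_def by blast
    next
      case False
      then obtain a b where "a \<in> G" "b \<in> G" "-y = a - b" using cover[of "-y"] y by auto
      then have "y = b - a" by simp
      then show ?thesis unfolding setdiff_def using \<open>a \<in> G\<close> \<open>b \<in> G\<close> by blast
    qed
  qed
qed

end
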